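(* Let $K\subset\mathbb{R}^n$ be a closed convex set. The map $\sigma\mapsto\overline{\varepsilon_K}(\sigma)$ is non-decreasing on $[0,\infty)$. If $c\ge1$, then $\overline{\varepsilon_K}(\sigma)\le\overline{\varepsilon_K}(c\sigma)\le c\,\overline{\varepsilon_K}(\sigma)$. If $c<1$, then $c\,\overline{\varepsilon_K}(\sigma)\le\overline{\varepsilon_K}(c\sigma)\le\overline{\varepsilon_K}(\sigma)$.
   Context: Local Gaussian width $w_\mu(\varepsilon)=\mathbb{E}\sup_{t\in B(\mu,\varepsilon)\cap K}\langle x,t\rangle$, $x\sim N(0,\mathbb{I}_n)$, $B$ the closed Euclidean ball. For $\sigma\ge0$ and $\mu\in K$, $\varepsilon_\mu(\sigma)=\operatorname{argmax}_{\varepsilon\ge0}[\sigma w_\mu(\varepsilon)-\varepsilon^2/2]$, and $\overline{\varepsilon_K}(\sigma)=\sup_{\mu\in K}\varepsilon_\mu(\sigma)$. *)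

theory Defs
  imports "HOL-Analysis.Analysis"
begin

definition std_gaussian :: "'a::euclidean_space measure" where
  "std_gaussian = density lborel
     (\<lambda>x. ennreal ((2 * pi) powr (- real DIM('a) / 2) * exp (- (norm x)\<^sup>2 / 2)))"

definition local_gw :: "'a::euclidean_space set \<Rightarrow> 'a \<Rightarrow> real \<Rightarrow> real" where
  "local_gw K \<mu> \<epsilon> = integral\<^sup>L std_gaussian (\<lambda>x. SUP t \<in> cball \<mu> \<epsilon> \<inter> K. x \<bullet> t)"

definition eps_mu :: "'a::euclidean_space set \<Rightarrow> 'a \<Rightarrow> real \<Rightarrow> real" where
  "eps_mu K \<mu> \<sigma> = (ARG_MAX (\<lambda>\<epsilon>. \<sigma> * local_gw K \<mu> \<epsilon> - \<epsilon>\<^sup>2 / 2) \<epsilon>. \<epsilon> \<ge> 0)"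

definition eps_bar :: "'a::euclidean_space set \<Rightarrow> real \<Rightarrow> real" where
  "eps_bar K \<sigma> = (SUP \<mu> \<in> K. eps_mu K \<mu> \<sigma>)"

end

theory Submission imports Defs "HOL-Probability.Probability" begin
lemma sum_le_prod_1p:
  assumes "finite A" "\<And>i. i \<in> A \<Longrightarrow> (0::real) \<le> f i"
  shows "sum f A \<le> (\<Prod>i\<in>A. 1 + f i)"
  using assms
proof (induction A rule: finite_induct)
  case empty then show ?case by simp
next
  case (insert a A)
  have ge1: "1 \<le> (\<Prod>i\<in>A. 1 + f i)"
    using insert by (intro prod_ge_1) auto
  have "sum f (insert a A) = f a + sum f A" using insert by simp
  also have "\<dots> \<le> f a + (\<Prod>i\<in>A. 1 + f i)" using insert by simp
  also have "\<dots> \<le> f a * (\<Prod>i\<in>A. 1 + f i) + (\<Prod>i\<in>A. 1 + f i)"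
    using ge1 insert(4)[of a] by (simp add: mult_le_cancel_left1)
  also have "\<dots> = (\<Prod>i\<in>insert a A. 1 + f i)" using insert by (simp add: algebra_simps)
  finally show ?case .
qed

lemma gauss_norm_integrable_lborel:
  "integrable (lborel::'a::euclidean_space measure) (\<lambda>x. exp (- (norm x)\<^sup>2 / 2) * norm x)"
proof -
  define f where "f = (\<lambda>t::real. exp (- t\<^sup>2 / 2) * (1 + \<bar>t\<bar>))"
  have f_nn: "0 \<le> f t" for t unfolding f_def by simp
  have f_int: "integrable lborel f"
  proof -
    have "integrable lborel (\<lambda>t. sqrt (2*pi) * (std_normal_density t * \<bar>t\<bar>^0 + std_normal_density t * \<bar>t\<bar>^1))"
      using integrable_std_normal_moment_abs[of 0] integrable_std_normal_moment_abs[of 1] by (intro integrable_mult_right integrable_add) auto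
    moreover have "(\<lambda>t. sqrt (2*pi) * (std_normal_density t * \<bar>t\<bar>^0 + std_normal_density t * \<bar>t\<bar>^1)) = f"
      by (auto simp: f_def normal_density_def fun_eq_iff field_simps)
    ultimately show ?thesis by metis
  qed
  have f_meas: "f \<in> borel_measurable borel" unfolding f_def by measurable
  have fin: "(\<integral>\<^sup>+t. ennreal (f t) \<partial>lborel) < \<infinity>"
    using f_int f_nn by (simp add: integrable_iff_bounded)
  have bound: "exp (- (norm x)\<^sup>2 / 2) * norm x \<le> (\<Prod>b\<in>(Basis::'a set). f (x \<bullet> b))" for x :: 'a
  proof -
    have "(norm x)\<^sup>2 = (\<Sum>b\<in>(Basis::'a set). (x \<bullet> b)\<^sup>2)"
      using euclidean_inner[of x x] by (simp add: power2_eq_square flip: power2_norm_eq_inner)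
    then have e: "exp (- (norm x)\<^sup>2 / 2) = (\<Prod>b\<in>(Basis::'a set). exp (- (x \<bullet> b)\<^sup>2 / 2))"
      by (simp add: exp_sum[symmetric] sum_negf sum_divide_distrib)
    have n: "norm x \<le> (\<Prod>b\<in>(Basis::'a set). 1 + \<bar>x \<bullet> b\<bar>)"
      using norm_le_l1[of x] sum_le_prod_1p[of "Basis::'a set" "\<lambda>b. \<bar>x \<bullet> b\<bar>"] by simp
    have "exp (- (norm x)\<^sup>2 / 2) * norm x \<le> exp (- (norm x)\<^sup>2 / 2) * (\<Prod>b\<in>(Basis::'a set). 1 + \<bar>x \<bullet> b\<bar>)"
      using n by simp
    also have "\<dots> = (\<Prod>b\<in>(Basis::'a set). f (x \<bullet> b))"
      unfolding e f_def by (simp add: prod.distrib)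
    finally show ?thesis .
  qed
  have "(\<integral>\<^sup>+x. ennreal (norm (exp (- (norm x)\<^sup>2 / 2) * norm x)) \<partial>(lborel::'a measure))
      \<le> (\<integral>\<^sup>+x. (\<Prod>b\<in>(Basis::'a set). ennreal (f (x \<bullet> b))) \<partial>lborel)"
    using bound f_nn by (intro nn_integral_mono) (simp add: prod_ennreal ennreal_leI)
  also have "\<dots> = (\<Prod>b\<in>(Basis::'a set). (\<integral>\<^sup>+t. ennreal (f t) \<partial>lborel))"
    by (rule nn_integral_lborel_prod) (use f_meas in auto)
  also have "\<dots> < \<infinity>"
    using fin by (simp add: power_less_top_ennreal)
  finally show ?thesis
    by (intro integrableI_bounded) (auto simp: )
qed

lemma gauss_norm_integrable:
  "integrable (std_gaussian::'a::euclidean_space measure) (\<lambda>x. norm x)"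
proof -
  define c where "c = (2 * pi) powr (- real DIM('a) / 2)"
  have "integrable lborel (\<lambda>x::'a. c * (exp (- (norm x)\<^sup>2 / 2) * norm x))"
    by (intro integrable_mult_right gauss_norm_integrable_lborel)
  then have "integrable lborel (\<lambda>x::'a. (c * exp (- (norm x)\<^sup>2 / 2)) *\<^sub>R norm x)"
    by (simp add: mult.assoc)
  then show ?thesis unfolding std_gaussian_def c_def
    by (subst integrable_density) auto
qed

definition Sf :: "'a::euclidean_space set \<Rightarrow> 'a \<Rightarrow> real \<Rightarrow> 'a \<Rightarrow> real" where
  "Sf K \<mu> \<epsilon> x = (SUP t \<in> cball \<mu> \<epsilon> \<inter> K. x \<bullet> t)"

lemma Sf_attained:
  assumes "closed K" "\<mu> \<in> K" "0 \<le> \<epsilon>"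
  shows "\<exists>t\<in>cball \<mu> \<epsilon> \<inter> K. Sf K \<mu> \<epsilon> x = x \<bullet> t"
    and "\<And>t. t \<in> cball \<mu> \<epsilon> \<inter> K \<Longrightarrow> x \<bullet> t \<le> Sf K \<mu> \<epsilon> x"
proof -
  define T where "T = cball \<mu> \<epsilon> \<inter> K"
  have cT: "compact T" unfolding T_def using assms by (intro compact_Int_closed) auto
  have neT: "T \<noteq> {}" unfolding T_def using assms centre_in_cball[of \<mu> \<epsilon>] by blast
  have "compact ((\<lambda>t. x \<bullet> t) ` T)"
    by (intro compact_continuous_image cT continuous_intros)
  then obtain s where s: "s \<in> (\<lambda>t. x \<bullet> t) ` T" "\<And>y. y \<in> (\<lambda>t. x \<bullet> t) ` T \<Longrightarrow> y \<le> s"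
    using compact_attains_sup[of "(\<lambda>t. x \<bullet> t) ` T"] neT by blast
  have eq: "Sf K \<mu> \<epsilon> x = s" unfolding Sf_def T_def[symmetric]
    by (rule cSup_eq_maximum) (use s in auto)
  show "\<exists>t\<in>cball \<mu> \<epsilon> \<inter> K. Sf K \<mu> \<epsilon> x = x \<bullet> t"
    using s(1) eq unfolding T_def by auto
  show "\<And>t. t \<in> cball \<mu> \<epsilon> \<inter> K \<Longrightarrow> x \<bullet> t \<le> Sf K \<mu> \<epsilon> x"
    using s(2) eq unfolding T_def by auto
qed

lemma Sf_abs_bound:
  assumes "closed K" "\<mu> \<in> K" "0 \<le> \<epsilon>"
  shows "\<bar>Sf K \<mu> \<epsilon> x\<bar> \<le> (norm \<mu> + \<epsilon>) * norm x"
proof -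
  obtain t where t: "t \<in> cball \<mu> \<epsilon> \<inter> K" "Sf K \<mu> \<epsilon> x = x \<bullet> t"
    using Sf_attained(1)[OF assms] by blast
  have nt: "norm t \<le> norm \<mu> + \<epsilon>"
    using t(1) norm_triangle_ineq2[of t \<mu>] by (auto simp: dist_norm norm_minus_commute)
  have "x \<bullet> t \<le> norm x * norm t" by (rule norm_cauchy_schwarz)
  also have "\<dots> \<le> norm x * (norm \<mu> + \<epsilon>)" using nt by (simp add: mult_left_mono)
  finally have up: "Sf K \<mu> \<epsilon> x \<le> (norm \<mu> + \<epsilon>) * norm x" using t(2) by (simp add: mult.commute)
  have "- (norm x * norm \<mu>) \<le> x \<bullet> \<mu>"
    using norm_cauchy_schwarz[of "-x" \<mu>] by simp
  also have "x \<bullet> \<mu> \<le> Sf K \<mu> \<epsilon> x" using Sf_attained(2)[OF assms, of \<mu>] assms by auto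
  finally have lo: "- ((norm \<mu> + \<epsilon>) * norm x) \<le> Sf K \<mu> \<epsilon> x"
    using assms by (smt (verit, best) mult_nonneg_nonneg norm_ge_zero mult.commute distrib_right)
  show ?thesis using up lo by linarith
qed

lemma Sf_lipschitz_x:
  assumes "closed K" "\<mu> \<in> K" "0 \<le> \<epsilon>"
  shows "Sf K \<mu> \<epsilon> x \<le> Sf K \<mu> \<epsilon> y + (norm \<mu> + \<epsilon>) * norm (x - y)"
proof -
  obtain t where t: "t \<in> cball \<mu> \<epsilon> \<inter> K" "Sf K \<mu> \<epsilon> x = x \<bullet> t"
    using Sf_attained(1)[OF assms] by blast
  have nt: "norm t \<le> norm \<mu> + \<epsilon>"
    using t(1) norm_triangle_ineq2[of t \<mu>] by (auto simp: dist_norm norm_minus_commute)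
  have "x \<bullet> t = y \<bullet> t + (x - y) \<bullet> t" by (simp add: inner_diff_left)
  also have "(x - y) \<bullet> t \<le> norm (x - y) * norm t" by (rule norm_cauchy_schwarz)
  also have "\<dots> \<le> norm (x - y) * (norm \<mu> + \<epsilon>)" using nt by (simp add: mult_left_mono)
  also have "y \<bullet> t \<le> Sf K \<mu> \<epsilon> y" using Sf_attained(2)[OF assms t(1)] .
  finally show ?thesis using t(2) by (simp add: mult.commute)
qed

lemma Sf_continuous:
  assumes "closed K" "\<mu> \<in> K" "0 \<le> \<epsilon>"
  shows "continuous_on UNIV (Sf K \<mu> \<epsilon>)"
proof (rule lipschitz_on_continuous_on)
  show "(norm \<mu> + \<epsilon>)-lipschitz_on UNIV (Sf K \<mu> \<epsilon>)"
  proof (rule lipschitz_onI)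
    fix x y :: 'a
    have "Sf K \<mu> \<epsilon> x \<le> Sf K \<mu> \<epsilon> y + (norm \<mu> + \<epsilon>) * norm (x - y)"
      "Sf K \<mu> \<epsilon> y \<le> Sf K \<mu> \<epsilon> x + (norm \<mu> + \<epsilon>) * norm (y - x)"
      using Sf_lipschitz_x[OF assms] by auto
    then show "dist (Sf K \<mu> \<epsilon> x) (Sf K \<mu> \<epsilon> y) \<le> (norm \<mu> + \<epsilon>) * dist x y"
      by (simp add: dist_norm dist_real_def norm_minus_commute abs_le_iff)
  qed (use assms in auto)
qed

lemma Sf_integrable:
  assumes "closed K" "\<mu> \<in> K" "0 \<le> \<epsilon>"
  shows "integrable std_gaussian (Sf K \<mu> \<epsilon>)"
proof (rule Bochner_Integration.integrable_bound)
  show "integrable std_gaussian (\<lambda>x. (norm \<mu> + \<epsilon>) * norm x)"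
    using gauss_norm_integrable by (intro integrable_mult_right) auto
  have "Sf K \<mu> \<epsilon> \<in> borel_measurable borel"
    by (intro borel_measurable_continuous_onI Sf_continuous assms)
  then show "Sf K \<mu> \<epsilon> \<in> borel_measurable std_gaussian"
    unfolding std_gaussian_def by simp
  show "AE x in std_gaussian. norm (Sf K \<mu> \<epsilon> x) \<le> norm ((norm \<mu> + \<epsilon>) * norm x)"
    using Sf_abs_bound[OF assms] assms by (intro AE_I2) auto
qed

lemma Sf_concave:
  assumes "closed K" "convex K" "\<mu> \<in> K" "0 \<le> a" "0 \<le> b" "0 \<le> l" "l \<le> 1"
  shows "l * Sf K \<mu> a x + (1 - l) * Sf K \<mu> b x \<le> Sf K \<mu> (l * a + (1 - l) * b) x"
proof -
  obtain t1 where t1: "t1 \<in> cball \<mu> a \<inter> K" "Sf K \<mu> a x = x \<bullet> t1"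
    using Sf_attained(1)[OF assms(1,3,4)] by blast
  obtain t2 where t2: "t2 \<in> cball \<mu> b \<inter> K" "Sf K \<mu> b x = x \<bullet> t2"
    using Sf_attained(1)[OF assms(1,3,5)] by blast
  have inK: "l *\<^sub>R t1 + (1 - l) *\<^sub>R t2 \<in> K"
    using assms t1 t2 by (intro convexD) auto
  have "dist \<mu> (l *\<^sub>R t1 + (1 - l) *\<^sub>R t2) = norm (l *\<^sub>R (\<mu> - t1) + (1 - l) *\<^sub>R (\<mu> - t2))"
    by (simp add: dist_norm algebra_simps)
  also have "\<dots> \<le> norm (l *\<^sub>R (\<mu> - t1)) + norm ((1 - l) *\<^sub>R (\<mu> - t2))"
    by (rule norm_triangle_ineq)
  also have "\<dots> = l * dist \<mu> t1 + (1 - l) * dist \<mu> t2"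
    using assms by (simp add: dist_norm)
  also have "\<dots> \<le> l * a + (1 - l) * b"
    using assms t1 t2 by (intro add_mono mult_left_mono) auto
  finally have inB: "l *\<^sub>R t1 + (1 - l) *\<^sub>R t2 \<in> cball \<mu> (l * a + (1 - l) * b)" by simp
  have "l * Sf K \<mu> a x + (1 - l) * Sf K \<mu> b x = x \<bullet> (l *\<^sub>R t1 + (1 - l) *\<^sub>R t2)"
    using t1 t2 by (simp add: inner_add_right)
  also have "\<dots> \<le> Sf K \<mu> (l * a + (1 - l) * b) x"
    using assms inK inB by (intro Sf_attained(2)) auto
  finally show ?thesis .
qed

lemma Sf_mono_eps:
  assumes "closed K" "convex K" "\<mu> \<in> K" "0 \<le> a" "a \<le> b"
  shows "Sf K \<mu> a x \<le> Sf K \<mu> b x" and "Sf K \<mu> b x \<le> Sf K \<mu> a x + (b - a) * norm x"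
proof -
  obtain t where t: "t \<in> cball \<mu> a \<inter> K" "Sf K \<mu> a x = x \<bullet> t"
    using Sf_attained(1)[OF assms(1,3,4)] by blast
  then show "Sf K \<mu> a x \<le> Sf K \<mu> b x"
    using assms by (intro Sf_attained(2)[of K \<mu> b t x, THEN order.trans[rotated]]) auto
  obtain s where s: "s \<in> cball \<mu> b \<inter> K" "Sf K \<mu> b x = x \<bullet> s"
    using Sf_attained(1)[of K \<mu> b x] assms by auto
  show "Sf K \<mu> b x \<le> Sf K \<mu> a x + (b - a) * norm x"
  proof (cases "b = 0")
    case True then show ?thesis using assms by simp
  next
    case False
    then have bpos: "0 < b" using assms by simp
    define r where "r = a / b"
    have r01: "0 \<le> r" "r \<le> 1" unfolding r_def using assms bpos by auto
    define s' where "s' = (1 - r) *\<^sub>R \<mu> + r *\<^sub>R s"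
    have s'K: "s' \<in> K" unfolding s'_def using assms s r01 by (intro convexD) auto
    have ds: "norm (s - \<mu>) \<le> b" using s by (simp add: dist_norm norm_minus_commute)
    have "dist \<mu> s' = r * norm (s - \<mu>)"
      unfolding s'_def dist_norm using r01
      by (simp add: algebra_simps norm_minus_commute flip: scaleR_diff_right)
    also have "\<dots> \<le> r * b" using ds r01 by (simp add: mult_left_mono)
    also have "\<dots> = a" unfolding r_def using bpos by simp
    finally have s'B: "s' \<in> cball \<mu> a" by simp
    have "x \<bullet> s = x \<bullet> s' + x \<bullet> ((1 - r) *\<^sub>R (s - \<mu>))"
      unfolding s'_def by (simp add: algebra_simps inner_add_right inner_diff_right)
    also have "x \<bullet> ((1 - r) *\<^sub>R (s - \<mu>)) \<le> norm x * norm ((1 - r) *\<^sub>R (s - \<mu>))"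
      by (rule norm_cauchy_schwarz)
    also have "\<dots> = norm x * ((1 - r) * norm (s - \<mu>))" using r01 by simp
    also have "\<dots> \<le> norm x * ((1 - r) * b)" using ds r01 by (intro mult_left_mono) auto
    also have "(1 - r) * b = b - a" unfolding r_def using bpos by (simp add: field_simps)
    also have "x \<bullet> s' \<le> Sf K \<mu> a x" using s'K s'B assms by (intro Sf_attained(2)) auto
    finally show ?thesis using s by (simp add: mult.commute)
  qed
qed

lemma lgw_eq: "local_gw K \<mu> \<epsilon> = integral\<^sup>L std_gaussian (Sf K \<mu> \<epsilon>)"
  unfolding local_gw_def Sf_def ..

lemma lgw_concave:
  assumes "closed K" "convex K" "\<mu> \<in> K" "0 \<le> a" "0 \<le> b" "0 \<le> l" "l \<le> 1"
  shows "l * local_gw K \<mu> a + (1 - l) * local_gw K \<mu> b \<le> local_gw K \<mu> (l * a + (1 - l) * b)"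
proof -
  have c: "0 \<le> l * a + (1 - l) * b" using assms by simp
  have "l * local_gw K \<mu> a + (1 - l) * local_gw K \<mu> b
      = integral\<^sup>L std_gaussian (\<lambda>x. l * Sf K \<mu> a x + (1 - l) * Sf K \<mu> b x)"
    unfolding lgw_eq using Sf_integrable[OF assms(1,3,4)] Sf_integrable[OF assms(1,3,5)]
    by simp
  also have "\<dots> \<le> local_gw K \<mu> (l * a + (1 - l) * b)"
    unfolding lgw_eq
    using Sf_integrable[OF assms(1,3,4)] Sf_integrable[OF assms(1,3,5)] Sf_integrable[OF assms(1,3) c]
    by (intro integral_mono Sf_concave assms) auto
  finally show ?thesis .
qed

lemma lgw_lip:
  fixes K :: "'a::euclidean_space set"
  assumes "closed K" "convex K" "\<mu> \<in> K" "0 \<le> a" "a \<le> b"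
  shows "local_gw K \<mu> a \<le> local_gw K \<mu> b"
    and "local_gw K \<mu> b \<le> local_gw K \<mu> a + (b - a) * integral\<^sup>L (std_gaussian::'a measure) norm"
proof -
  have b: "0 \<le> b" using assms by simp
  note I = Sf_integrable[OF assms(1,3,4)] Sf_integrable[OF assms(1,3) b] gauss_norm_integrable
  show "local_gw K \<mu> a \<le> local_gw K \<mu> b"
    unfolding lgw_eq using I by (intro integral_mono Sf_mono_eps(1) assms) auto
  have "local_gw K \<mu> b \<le> integral\<^sup>L std_gaussian (\<lambda>x. Sf K \<mu> a x + (b - a) * norm x)"
    unfolding lgw_eq using I by (intro integral_mono Sf_mono_eps(2) assms) auto
  also have "\<dots> = local_gw K \<mu> a + integral\<^sup>L (std_gaussian::'a measure) (\<lambda>x. (b - a) * norm x)"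
    unfolding lgw_eq by (rule Bochner_Integration.integral_add) (use I in auto)
  also have "\<dots> = local_gw K \<mu> a + (b - a) * integral\<^sup>L (std_gaussian::'a measure) norm"
    by simp
  finally show "local_gw K \<mu> b \<le> local_gw K \<mu> a + (b - a) * integral\<^sup>L (std_gaussian::'a measure) norm" .
qed

locale cg =
  fixes g :: "real \<Rightarrow> real" and L :: real
  assumes conc: "\<And>a b l. 0 \<le> a \<Longrightarrow> 0 \<le> b \<Longrightarrow> 0 \<le> l \<Longrightarrow> l \<le> 1 \<Longrightarrow>
      l * g a + (1 - l) * g b \<le> g (l * a + (1 - l) * b)"
    and mono: "\<And>a b. 0 \<le> a \<Longrightarrow> a \<le> b \<Longrightarrow> g a \<le> g b"
    and lip: "\<And>a b. 0 \<le> a \<Longrightarrow> a \<le> b \<Longrightarrow> g b \<le> g a + (b - a) * L"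
    and L: "0 \<le> L"
begin

lemma four_point:
  assumes "0 \<le> a" "a < b" "0 < d" "2 * d \<le> b - a"
  shows "g a + g b \<le> g (a + d) + g (b - d)"
proof -
  define l where "l = (b - a - d) / (b - a)"
  have l01: "0 \<le> l" "l \<le> 1" unfolding l_def using assms by auto
  have lb: "l * (b - a) = b - a - d" unfolding l_def using assms by simp
  have e1: "l * a + (1 - l) * b = b - (b - a - d)"
  proof -
    have "l * a + (1 - l) * b = b - l * (b - a)" by (simp add: algebra_simps)
    then show ?thesis using lb by simp
  qed
  have e2: "(1 - l) * a + (1 - (1 - l)) * b = a + (b - a - d)"
  proof -
    have "(1 - l) * a + (1 - (1 - l)) * b = a + l * (b - a)" by (simp add: algebra_simps)
    then show ?thesis using lb by simp
  qed
  have "l * g a + (1 - l) * g b \<le> g (a + d)"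
    using conc[of a b l] assms l01 e1 by simp
  moreover have "(1 - l) * g a + (1 - (1 - l)) * g b \<le> g (b - d)"
    using conc[of a b "1 - l"] assms l01 e2 by simp
  ultimately show ?thesis by (simp add: algebra_simps)
qed

definition F :: "real \<Rightarrow> real \<Rightarrow> real" where "F s e = s * g e - e\<^sup>2 / 2"

lemma argmax_exists:
  assumes "0 \<le> s"
  shows "\<exists>a. is_arg_max (\<lambda>e. s * g e - e\<^sup>2 / 2) (\<lambda>e. 0 \<le> e) a"
proof -
  define M where "M = 2 * s * L"
  have M0: "0 \<le> M" unfolding M_def using assms L by simp
  have "L-lipschitz_on {0..M} g"
  proof (rule lipschitz_onI)
    fix x y assume xy: "x \<in> {0..M}" "y \<in> {0..M}"
    show "dist (g x) (g y) \<le> L * dist x y"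
    proof (cases "x \<le> y")
      case True then show ?thesis using xy mono[of x y] lip[of x y]
        by (auto simp: dist_real_def abs_le_iff mult.commute)
    next
      case False then show ?thesis using xy mono[of y x] lip[of y x]
        by (auto simp: dist_real_def abs_le_iff mult.commute)
    qed
  qed (use L in auto)
  then have "continuous_on {0..M} g" by (rule lipschitz_on_continuous_on)
  then have "continuous_on {0..M} (\<lambda>e. s * g e - e\<^sup>2 / 2)" by (intro continuous_intros) auto
  then obtain a where a: "a \<in> {0..M}" "\<And>y. y \<in> {0..M} \<Longrightarrow> s * g y - y\<^sup>2 / 2 \<le> s * g a - a\<^sup>2 / 2"
    using continuous_attains_sup[of "{0..M}" "\<lambda>e. s * g e - e\<^sup>2 / 2"] M0 by auto
  have "s * g y - y\<^sup>2 / 2 \<le> s * g a - a\<^sup>2 / 2" if y: "0 \<le> y" for y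
  proof (cases "y \<le> M")
    case True then show ?thesis using a y by auto
  next
    case False
    have "g y \<le> g 0 + y * L" using lip[of 0 y] y by simp
    then have "s * g y \<le> s * (g 0 + y * L)" using assms by (intro mult_left_mono) auto
    also have "\<dots> = s * g 0 + y * (s * L)" by (simp add: algebra_simps)
    finally have "s * g y \<le> s * g 0 + y * (s * L)" .
    moreover have "y * (s * L) < y * (y / 2)"
    proof -
      have yp: "0 < y" using False M0 by linarith
      have "s * L < y / 2" using False unfolding M_def by simp
      then show ?thesis using yp by (intro mult_strict_left_mono) auto
    qed
    moreover have "s * g 0 \<le> s * g a - a\<^sup>2 / 2" using a(2)[of 0] M0 by simp
    moreover have "y * (y / 2) = y\<^sup>2 / 2" by (simp add: power2_eq_square)
    ultimately show ?thesis by argo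
  qed
  then have "is_arg_max (\<lambda>e. s * g e - e\<^sup>2 / 2) (\<lambda>e. 0 \<le> e) a"
    using a(1) by (auto simp: is_arg_max_def not_less)
  then show ?thesis by blast
qed

lemma argmax_bound:
  assumes "0 \<le> s" "is_arg_max (\<lambda>e. s * g e - e\<^sup>2 / 2) (\<lambda>e. 0 \<le> e) a"
  shows "0 \<le> a" "a \<le> 2 * s * L"
proof -
  show a0: "0 \<le> a" using assms by (simp add: is_arg_max_def)
  have f0: "s * g 0 - 0\<^sup>2 / 2 \<le> s * g a - a\<^sup>2 / 2"
    using assms(2) by (auto simp: is_arg_max_def not_less)
  have "g a \<le> g 0 + a * L" using lip[of 0 a] a0 by simp
  then have "s * g a \<le> s * (g 0 + a * L)" using assms by (intro mult_left_mono) auto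
  also have "\<dots> = s * g 0 + a * (s * L)" by (simp add: algebra_simps)
  finally have "s * g a \<le> s * g 0 + a * (s * L)" .
  with f0 have "a * a \<le> a * (2 * s * L)" by (simp add: power2_eq_square algebra_simps)
  show "a \<le> 2 * s * L"
  proof (rule ccontr)
    assume "\<not> a \<le> 2 * s * L"
    moreover have "0 \<le> 2 * s * L" using assms L by simp
    ultimately have "0 < a" by linarith
    then have "a * (2 * s * L) < a * a" using \<open>\<not> a \<le> 2 * s * L\<close>
      by (intro mult_strict_left_mono) auto
    with \<open>a * a \<le> a * (2 * s * L)\<close> show False by simp
  qed
qed

lemma argmax_unique:
  assumes "0 \<le> s" "is_arg_max (\<lambda>e. s * g e - e\<^sup>2 / 2) (\<lambda>e. 0 \<le> e) a"
    "is_arg_max (\<lambda>e. s * g e - e\<^sup>2 / 2) (\<lambda>e. 0 \<le> e) b"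
  shows "a = b"
proof (rule ccontr)
  assume ne: "a \<noteq> b"
  have a0: "0 \<le> a" and b0: "0 \<le> b" using assms by (auto simp: is_arg_max_def)
  define m where "m = (1/2) * a + (1 - 1/2) * b"
  have m0: "0 \<le> m" using a0 b0 m_def by simp
  have gm: "(1/2) * g a + (1 - 1/2) * g b \<le> g m" unfolding m_def using a0 b0 by (intro conc) auto
  have fa: "s * g m - m\<^sup>2 / 2 \<le> s * g a - a\<^sup>2 / 2"
    using assms(2) m0 by (auto simp: is_arg_max_def not_less)
  have fb: "s * g m - m\<^sup>2 / 2 \<le> s * g b - b\<^sup>2 / 2"
    using assms(3) m0 by (auto simp: is_arg_max_def not_less)
  have sq: "m\<^sup>2 < (a\<^sup>2 + b\<^sup>2) / 2"
  proof -
    have "0 < (a - b)\<^sup>2" using ne by simp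
    then show ?thesis unfolding m_def by (simp add: power2_eq_square algebra_simps)
  qed
  have "s * ((g a + g b) / 2) \<le> s * g m" using gm assms(1) by (intro mult_left_mono) auto
  then have "s * g a + s * g b \<le> 2 * (s * g m)" by (simp add: algebra_simps)
  then show False using fa fb sq by argo
qed

lemma argmax_compare:
  assumes s: "0 \<le> s1" "s1 \<le> s2"
    and A: "is_arg_max (\<lambda>e. s1 * g e - e\<^sup>2 / 2) (\<lambda>e. 0 \<le> e) a"
    and B: "is_arg_max (\<lambda>e. s2 * g e - e\<^sup>2 / 2) (\<lambda>e. 0 \<le> e) b"
  shows "a \<le> b" "s1 * b \<le> s2 * a"
proof -
  have a0: "0 \<le> a" and b0: "0 \<le> b" using A B by (auto simp: is_arg_max_def)
  have A': "\<And>y. 0 \<le> y \<Longrightarrow> s1 * g y - y\<^sup>2 / 2 \<le> s1 * g a - a\<^sup>2 / 2"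
    using A by (auto simp: is_arg_max_def not_less)
  have B': "\<And>y. 0 \<le> y \<Longrightarrow> s2 * g y - y\<^sup>2 / 2 \<le> s2 * g b - b\<^sup>2 / 2"
    using B by (auto simp: is_arg_max_def not_less)
  show ab: "a \<le> b"
  proof (cases "s1 = s2")
    case True then show ?thesis using argmax_unique[of s1 a b] A B s by simp
  next
    case False
    show ?thesis
    proof (rule ccontr)
      assume "\<not> a \<le> b"
      then have ba: "b < a" by simp
      have 1: "s1 * g b - b\<^sup>2 / 2 \<le> s1 * g a - a\<^sup>2 / 2" using A' b0 .
      have 2: "s2 * g a - a\<^sup>2 / 2 \<le> s2 * g b - b\<^sup>2 / 2" using B' a0 .
      have "(s2 - s1) * (g a - g b) \<le> 0" using 1 2 by (simp add: algebra_simps)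
      then have "g a - g b \<le> 0" using False s
        by (metis diff_gt_0_iff_gt linorder_not_le mult_pos_pos order_le_less)
      then have "s1 * (g a - g b) \<le> 0" using s by (simp add: mult_nonneg_nonpos)
      then have "a\<^sup>2 \<le> b\<^sup>2" using 1 by (simp add: algebra_simps)
      then have "a \<le> b" by (rule power2_le_imp_le) (use b0 in auto)
      then show False using ba by simp
    qed
  qed
  show "s1 * b \<le> s2 * a"
  proof (rule ccontr)
    assume "\<not> s1 * b \<le> s2 * a"
    then have D: "0 < s1 * b - s2 * a" by simp
    have s1pos: "0 < s1"
    proof (rule ccontr)
      assume "\<not> 0 < s1" then have "s1 = 0" using s by simp
      then have "s2 * a < 0" using D by simp
      moreover have "0 \<le> s2 * a" by (rule mult_nonneg_nonneg) (use s a0 in auto)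
      ultimately show False by linarith
    qed
    have "a \<noteq> b"
    proof
      assume "a = b"
      then have "s1 * b \<le> s2 * a" using s a0 by (simp add: mult_right_mono)
      then show False using D by simp
    qed
    then have ab': "a < b" using ab by simp
    define d where "d = min ((b - a) / 2) ((s1 * b - s2 * a) / (s1 + s2))"
    have d0: "0 < d" unfolding d_def using ab' D s1pos s by auto
    have d1: "2 * d \<le> b - a"
    proof -
      have "d \<le> (b - a) / 2" unfolding d_def by (rule min.cobounded1)
      then show ?thesis by simp
    qed
    have d2: "d * (s1 + s2) \<le> s1 * b - s2 * a"
    proof -
      have pos: "0 < s1 + s2" using s1pos s by simp
      have "d \<le> (s1 * b - s2 * a) / (s1 + s2)" unfolding d_def by (rule min.cobounded2)
      then have "d * (s1 + s2) \<le> (s1 * b - s2 * a) / (s1 + s2) * (s1 + s2)"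
        using pos by (intro mult_right_mono) auto
      also have "\<dots> = s1 * b - s2 * a" using pos by simp
      finally show ?thesis .
    qed
    have h1: "s2 * g (b - d) - (b - d)\<^sup>2 / 2 \<le> s2 * g b - b\<^sup>2 / 2"
      using B'[of "b - d"] d1 a0 d0 by simp
    have h2: "s1 * g (a + d) - (a + d)\<^sup>2 / 2 \<le> s1 * g a - a\<^sup>2 / 2"
      using A'[of "a + d"] a0 d0 by simp
    have h3: "g b - g (b - d) \<le> g (a + d) - g a"
      using four_point[OF a0 ab' d0 d1] by simp
    define G where "G = g b - g (b - d)"
    define H where "H = g (a + d) - g a"
    have i1: "b * d - d * d / 2 \<le> s2 * G"
    proof -
      have q1: "(b - d)\<^sup>2 = b * b - 2 * (b * d) + d * d" by (simp add: power2_eq_square algebra_simps)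
      have q2: "b\<^sup>2 = b * b" by (simp add: power2_eq_square)
      have q3: "s2 * G = s2 * g b - s2 * g (b - d)" by (simp add: G_def right_diff_distrib)
      show ?thesis using h1 q1 q2 q3 by argo
    qed
    have i2: "s1 * H \<le> a * d + d * d / 2"
    proof -
      have q1: "(a + d)\<^sup>2 = a * a + 2 * (a * d) + d * d" by (simp add: power2_eq_square algebra_simps)
      have q2: "a\<^sup>2 = a * a" by (simp add: power2_eq_square)
      have q3: "s1 * H = s1 * g (a + d) - s1 * g a" by (simp add: H_def right_diff_distrib)
      show ?thesis using h2 q1 q2 q3 by argo
    qed
    have j1: "s1 * (b * d - d * d / 2) \<le> s1 * (s2 * G)" using i1 s1pos by (intro mult_left_mono) auto
    have j2: "s2 * (s1 * H) \<le> s2 * (a * d + d * d / 2)" using i2 s s1pos by (intro mult_left_mono) auto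
    have j3: "s1 * s2 * G \<le> s1 * s2 * H" using h3 s s1pos unfolding G_def H_def
      by (intro mult_left_mono) auto
    have e1: "s1 * (b * d - d * d / 2) = s1 * b * d - s1 * d * d / 2" by (simp add: algebra_simps)
    have e2: "s2 * (a * d + d * d / 2) = s2 * a * d + s2 * d * d / 2" by (simp add: algebra_simps)
    have e3: "s1 * (s2 * G) = s1 * s2 * G" "s2 * (s1 * H) = s1 * s2 * H" by (simp_all add: algebra_simps)
    have k: "s1 * b * d - s1 * d * d / 2 \<le> s2 * a * d + s2 * d * d / 2"
      using j1 j2 j3 e1 e2 e3 by argo
    have e4: "d * (s1 * b - s2 * a) = s1 * b * d - s2 * a * d" by (simp add: algebra_simps)
    have e5: "d * (d * (s1 + s2)) / 2 = s1 * d * d / 2 + s2 * d * d / 2" by (simp add: algebra_simps)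
    have "d * (s1 * b - s2 * a) \<le> d * (d * (s1 + s2)) / 2"
      using k e4 e5 by argo
    also have "\<dots> \<le> d * (s1 * b - s2 * a) / 2" using d2 d0 by simp
    finally have "d * (s1 * b - s2 * a) \<le> 0" by simp
    then show False using d0 D by (simp add: mult_le_0_iff)
  qed
qed

end

lemma L_nonneg: "0 \<le> integral\<^sup>L (std_gaussian::'a::euclidean_space measure) norm"
  by (rule integral_nonneg_AE) auto

lemma cg_local:
  fixes K :: "'a::euclidean_space set"
  assumes "closed K" "convex K" "\<mu> \<in> K"
  shows "cg (local_gw K \<mu>) (integral\<^sup>L (std_gaussian::'a measure) norm)"
proof
  show "\<And>a b l. 0 \<le> a \<Longrightarrow> 0 \<le> b \<Longrightarrow> 0 \<le> l \<Longrightarrow> l \<le> 1 \<Longrightarrow>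
      l * local_gw K \<mu> a + (1 - l) * local_gw K \<mu> b \<le> local_gw K \<mu> (l * a + (1 - l) * b)"
    using lgw_concave[OF assms] by blast
  show "\<And>a b. 0 \<le> a \<Longrightarrow> a \<le> b \<Longrightarrow> local_gw K \<mu> a \<le> local_gw K \<mu> b"
    using lgw_lip(1)[OF assms] by blast
  show "\<And>a b. 0 \<le> a \<Longrightarrow> a \<le> b \<Longrightarrow> local_gw K \<mu> b \<le> local_gw K \<mu> a + (b - a) * integral\<^sup>L (std_gaussian::'a measure) norm"
    using lgw_lip(2)[OF assms] by blast
  show "0 \<le> integral\<^sup>L (std_gaussian::'a measure) norm" by (rule L_nonneg)
qed

lemma eps_mu_argmax:
  fixes K :: "'a::euclidean_space set"
  assumes "closed K" "convex K" "\<mu> \<in> K" "0 \<le> \<sigma>"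
  shows "is_arg_max (\<lambda>e. \<sigma> * local_gw K \<mu> e - e\<^sup>2 / 2) (\<lambda>e. 0 \<le> e) (eps_mu K \<mu> \<sigma>)"
proof -
  interpret cg "local_gw K \<mu>" "integral\<^sup>L (std_gaussian::'a measure) norm"
    by (rule cg_local[OF assms(1-3)])
  show ?thesis unfolding eps_mu_def arg_max_def
    using argmax_exists[OF assms(4)] by (rule someI_ex)
qed

lemma eps_mu_props:
  fixes K :: "'a::euclidean_space set"
  assumes "closed K" "convex K" "\<mu> \<in> K" "0 \<le> \<sigma>"
  shows "0 \<le> eps_mu K \<mu> \<sigma>" "eps_mu K \<mu> \<sigma> \<le> 2 * \<sigma> * integral\<^sup>L (std_gaussian::'a measure) norm"
proof -
  interpret cg "local_gw K \<mu>" "integral\<^sup>L (std_gaussian::'a measure) norm"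
    by (rule cg_local[OF assms(1-3)])
  show "0 \<le> eps_mu K \<mu> \<sigma>" "eps_mu K \<mu> \<sigma> \<le> 2 * \<sigma> * integral\<^sup>L (std_gaussian::'a measure) norm"
    using argmax_bound[OF assms(4) eps_mu_argmax[OF assms]] by auto
qed

lemma eps_mu_compare:
  fixes K :: "'a::euclidean_space set"
  assumes "closed K" "convex K" "\<mu> \<in> K" "0 \<le> s1" "s1 \<le> s2"
  shows "eps_mu K \<mu> s1 \<le> eps_mu K \<mu> s2" "s1 * eps_mu K \<mu> s2 \<le> s2 * eps_mu K \<mu> s1"
proof -
  interpret cg "local_gw K \<mu>" "integral\<^sup>L (std_gaussian::'a measure) norm"
    by (rule cg_local[OF assms(1-3)])
  have s2: "0 \<le> s2" using assms by simp
  note A = eps_mu_argmax[OF assms(1-4)] and B = eps_mu_argmax[OF assms(1-3) s2]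
  show "eps_mu K \<mu> s1 \<le> eps_mu K \<mu> s2" "s1 * eps_mu K \<mu> s2 \<le> s2 * eps_mu K \<mu> s1"
    using argmax_compare[OF assms(4,5) A B] by auto
qed

lemma eps_bar_bdd:
  fixes K :: "'a::euclidean_space set"
  assumes "closed K" "convex K" "0 \<le> \<sigma>"
  shows "bdd_above ((\<lambda>\<mu>. eps_mu K \<mu> \<sigma>) ` K)"
  using eps_mu_props(2)[OF assms(1,2) _ assms(3)] by (intro bdd_aboveI2) blast

lemma eps_bar_nonneg:
  fixes K :: "'a::euclidean_space set"
  assumes "closed K" "convex K" "K \<noteq> {}" "0 \<le> \<sigma>"
  shows "0 \<le> eps_bar K \<sigma>"
proof -
  obtain \<mu> where "\<mu> \<in> K" using assms by blast
  then show ?thesis unfolding eps_bar_def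
    using eps_mu_props(1)[OF assms(1,2) _ assms(4)] eps_bar_bdd[OF assms(1,2,4)]
    by (intro cSUP_upper2[of _ _ \<mu>]) auto
qed

lemma eps_bar_zero:
  fixes K :: "'a::euclidean_space set"
  assumes "closed K" "convex K" "K \<noteq> {}"
  shows "eps_bar K 0 = 0"
proof -
  have "\<And>\<mu>. \<mu> \<in> K \<Longrightarrow> eps_mu K \<mu> 0 = 0"
    using eps_mu_props[OF assms(1,2) _ order.refl] by (simp add: order.antisym)
  then have "eps_bar K 0 = (SUP \<mu>\<in>K. (0::real))" unfolding eps_bar_def
    by (intro SUP_cong) auto
  then show ?thesis using assms(3) by simp
qed

lemma eps_bar_mono:
  fixes K :: "'a::euclidean_space set"
  assumes "closed K" "convex K" "K \<noteq> {}" "0 \<le> s1" "s1 \<le> s2"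
  shows "eps_bar K s1 \<le> eps_bar K s2"
  unfolding eps_bar_def
  using eps_bar_bdd[OF assms(1,2), of s2] assms eps_mu_compare(1)[OF assms(1,2) _ assms(4,5)]
  by (intro cSUP_mono) auto

lemma eps_bar_upper:
  fixes K :: "'a::euclidean_space set"
  assumes "closed K" "convex K" "K \<noteq> {}" "0 < s1" "s1 \<le> s2"
  shows "eps_bar K s2 \<le> (s2 / s1) * eps_bar K s1"
  unfolding eps_bar_def
proof (rule cSUP_least)
  show "K \<noteq> {}" by fact
  fix \<mu> assume mu: "\<mu> \<in> K"
  have "s1 * eps_mu K \<mu> s2 \<le> s2 * eps_mu K \<mu> s1"
    using eps_mu_compare(2)[OF assms(1,2) mu _ assms(5)] assms(4) by simp
  then have "eps_mu K \<mu> s2 \<le> (s2 / s1) * eps_mu K \<mu> s1"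
    using assms(4) by (simp add: field_simps)
  also have "\<dots> \<le> (s2 / s1) * (SUP \<mu>\<in>K. eps_mu K \<mu> s1)"
    using assms mu eps_bar_bdd[OF assms(1,2), of s1]
    by (intro mult_left_mono cSUP_upper) auto
  finally show "eps_mu K \<mu> s2 \<le> (s2 / s1) * (SUP \<mu>\<in>K. eps_mu K \<mu> s1)" .
qed

theorem mainTheorem20:
  fixes K :: "'a::euclidean_space set"
  assumes "closed K" and "convex K" and "K \<noteq> {}"
  shows "mono_on {0..} (eps_bar K) \<and>
    (\<forall>\<sigma> c. \<sigma> \<ge> 0 \<longrightarrow> c \<ge> 1 \<longrightarrow>
       eps_bar K \<sigma> \<le> eps_bar K (c * \<sigma>) \<and> eps_bar K (c * \<sigma>) \<le> c * eps_bar K \<sigma>) \<and>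
    (\<forall>\<sigma> c. \<sigma> \<ge> 0 \<longrightarrow> 0 \<le> c \<longrightarrow> c < 1 \<longrightarrow>
       c * eps_bar K \<sigma> \<le> eps_bar K (c * \<sigma>) \<and> eps_bar K (c * \<sigma>) \<le> eps_bar K \<sigma>)"
proof (intro conjI allI impI)
  show "mono_on {0..} (eps_bar K)"
    by (rule mono_onI) (use eps_bar_mono[OF assms] in auto)
next
  fix \<sigma> c :: real assume s: "0 \<le> \<sigma>" and c: "1 \<le> c"
  show "eps_bar K \<sigma> \<le> eps_bar K (c * \<sigma>)"
    using s c by (intro eps_bar_mono[OF assms s]) (simp add: mult_right_mono[of 1 c \<sigma>, simplified])
  show "eps_bar K (c * \<sigma>) \<le> c * eps_bar K \<sigma>"
  proof (cases "\<sigma> = 0")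
    case True then show ?thesis using eps_bar_zero[OF assms] by simp
  next
    case False
    then have sp: "0 < \<sigma>" using s by simp
    have "eps_bar K (c * \<sigma>) \<le> (c * \<sigma> / \<sigma>) * eps_bar K \<sigma>"
      using sp c by (intro eps_bar_upper[OF assms sp]) (simp add: mult_right_mono[of 1 c \<sigma>, simplified])
    then show ?thesis using sp by simp
  qed
next
  fix \<sigma> c :: real assume s: "0 \<le> \<sigma>" and c0: "0 \<le> c" and c1: "c < 1"
  have cs: "c * \<sigma> \<le> \<sigma>" using s c1 by (simp add: mult_right_mono[of c 1 \<sigma>, simplified])
  show "eps_bar K (c * \<sigma>) \<le> eps_bar K \<sigma>"
    using c0 s cs by (intro eps_bar_mono[OF assms]) auto
  show "c * eps_bar K \<sigma> \<le> eps_bar K (c * \<sigma>)"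
  proof (cases "c = 0 \<or> \<sigma> = 0")
    case True then show ?thesis
      using eps_bar_zero[OF assms] eps_bar_nonneg[OF assms order.refl] by auto
  next
    case False
    then have p: "0 < c * \<sigma>" using s c0 by simp
    have "eps_bar K \<sigma> \<le> (\<sigma> / (c * \<sigma>)) * eps_bar K (c * \<sigma>)"
      by (rule eps_bar_upper[OF assms p cs])
    then have "c * eps_bar K \<sigma> \<le> c * ((\<sigma> / (c * \<sigma>)) * eps_bar K (c * \<sigma>))"
      using c0 by (rule mult_left_mono)
    also have "\<dots> = eps_bar K (c * \<sigma>)" using False by simp
    finally show ?thesis .
  qed
qed

end
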